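(* Consider any fair, well-formed execution of COP as described in the context, with history $\sigma$ (and $S$ correct or Byzantine). For each client $C_i$, the sequence $\pi_i$ defined in the context preserves the real-time order of $\sigma$: for any two operations $o,o'$ in $\pi_i$, if $o$ completes before $o'$ is invoked in $\sigma$, then $o$ appears before $o'$ in $\pi_i$.
   Context: System model. Clients $C_1,\dots,C_n$ and server $S$ in an asynchronous system, each client connected to $S$ by a reliable FIFO channel; clients are correct; $S$ is correct or Byzantine (may send arbitrary messages). Executions are fair and well-formed. Functionality. $F$ is deterministic over states $\mathcal{S}$, operations $\mathcal{O}$, responses $\mathcal{R}$: $F(s,o)=(s',r)$, extended to sequences by applying operations in order. $\mathrm{commute}_F(s,\rho_1,\rho_2)$ is true iff every interleaving of sequences $\rho_1,\rho_2$ (preserving each one's internal order) executed from $s$ yields the same final state and the same respective responses. Cryptography (ideal). $\mathrm{hash}$ is ideal collision-free; $\mathrm{sign}_i$ is invocable only by $C_i$ and $\mathrm{verify}_i(\phi,m)$ is true iff $C_i$ previously executed $\mathrm{sign}_i(m)$ obtaining $\phi$. $\|$ is concatenation. COP client $C_i$. State: $u$ (initially $\bot$); $c$ (initially $0$); map $H$ with $H[0]=\mathrm{null}$; map $Z$ to $\{\mathrm{success},\mathrm{abort}\}$; state $s$ (initially $s_0$). (1) On invocation of $o$: $u\leftarrow o$, send $\langle\mathrm{invoke},o,c,\mathrm{sign}_i(\mathrm{invoke}\|o\|i)\rangle$ to $S$. (2) On $\langle\mathrm{reply},\omega\rangle$: $\gamma,\mu\leftarrow\langle\rangle$. For $k=1,\dots,\mathrm{length}(\omega)$: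 $(o,j,\tau)=\omega[k]$, $l=c+k$; halt if $\mathrm{verify}_j(\tau,\mathrm{invoke}\|o\|j)$ fails; if $H[l]$ undefined set $H[l]\leftarrow\mathrm{hash}(H[l-1]\|o\|l\|j)$, else halt if $H[l]\neq\mathrm{hash}(H[l-1]\|o\|l\|j)$; if $j=i$ and $Z[l]=\mathrm{success}$ append $o$ to $\mu$, else if $j\neq i$ append $o$ to $\gamma$. Halt if $\omega$ is empty or its last entry has operation $\neq u$ or index $\neq i$. $(a,r)\leftarrow F(s,\mu)$. If $\mathrm{commute}_F(a,\langle u\rangle,\gamma)$: $(a,r)\leftarrow F(a,u)$, $Z[l]\leftarrow\mathrm{success}$; else $r\leftarrow\bot$, $Z[l]\leftarrow\mathrm{abort}$. Send $\langle\mathrm{commit},u,l,H[l],Z[l],\mathrm{sign}_i(\mathrm{commit}\|u\|l\|H[l]\|Z[l])\rangle$ to $S$, set $u\leftarrow\bot$, output $r$. (3) On $\langle\mathrm{broadcast},o,q,h,z,\phi,j\rangle$: halt unless $q=c+1$ and $\mathrm{verify}_j(\phi,\mathrm{commit}\|o\|q\|h\|z)$; if $H[q]$ undefined set $H[q]\leftarrow\mathrm{hash}(H[q-1]\|o\|q\|j)$; halt if $h\neq H[q]$; if $z=\mathrm{success}$, $(s,\cdot)\leftarrow F(s,o)$; $c\leftarrow c+1$. COP server $S$ (when correct). State $t=0$, $b=0$, maps $I,O$ empty. On $\langle\mathrm{invoke},o,c,\tau\rangle$ from $C_i$: $t\leftarrow t+1$, $I[t]\leftarrow(o,i,\tau)$,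 send $\langle\mathrm{reply},\langle I[c+1],\dots,I[t]\rangle\rangle$ to $C_i$. On $\langle\mathrm{commit},o,q,h,z,\phi\rangle$ from $C_i$: $O[q]\leftarrow(o,h,z,\phi,i)$; while $O[b+1]$ defined: $b\leftarrow b+1$, send $\langle\mathrm{broadcast},o',b,h',z',\phi',j\rangle$ to all clients where $(o',h',z',\phi',j)=O[b]$. Terminology. The history $\sigma$ is the sequence of invocation/response events at the clients. $C_i$ commits $o$ when it issues the commit signature in step (2); the value $l$ there is the sequence number of $o$. A client confirms $o$ when it processes a broadcast message for $o$ in step (3) passing all checks. Definition of $\pi_i$: let $o$ be the operation committed by $C_i$ with the highest sequence number among those operations of $C_i$ that have been confirmed by some client $C_k$ (possibly $C_k=C_i$); let $\alpha_i$ be the sequence of operations confirmed by $C_k$ up to and including $o$; let $\beta_i$ be the sequence of operations committed by $C_i$ with sequence number higher than that of $o$, in order of sequence number; $\pi_i=\alpha_i\circ\beta_i$ (concatenation). *)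

theory Defs
  imports Main
begin

datatype zflag = Success | Abort

(* ideal collision-free hash: hash(H[l-1] || p || l || j) is the injective term Hash prev p l j *)
datatype 'op hv = HNull | Hash "'op hv" 'op nat nat

(* signed messages: invoke||p||i  and  commit||p||l||h||z *)
datatype 'op smsg = SInvoke 'op nat | SCommit 'op nat "'op hv" zflag

(* ideal signatures: a signature value is a term Sig j m *)
datatype 'op sig = Sig nat "'op smsg"

(* verify_j(phi,m) is true iff C_j previously executed sign_j(m) obtaining phi;
   sg is the set of (signer, message) pairs signed before the current event *)
definition verify :: "(nat \<times> 'op smsg) set \<Rightarrow> nat \<Rightarrow> 'op sig \<Rightarrow> 'op smsg \<Rightarrow> bool" where
  "verify sg j phi m \<longleftrightarrow> phi = Sig j m \<and> (j, m) \<in> sg"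

fun F_seq :: "('s \<Rightarrow> 'op \<Rightarrow> 's \<times> 'r) \<Rightarrow> 's \<Rightarrow> 'op list \<Rightarrow> 's" where
  "F_seq F s [] = s"
| "F_seq F s (p # os) = F_seq F (fst (F s p)) os"

fun run_tagged :: "('s \<Rightarrow> 'op \<Rightarrow> 's \<times> 'r) \<Rightarrow> 's \<Rightarrow> ('op + 'op) list \<Rightarrow> 's \<times> 'r list \<times> 'r list" where
  "run_tagged F s [] = (s, [], [])"
| "run_tagged F s (Inl p # xs) =
     (let (s', r) = F s p; (s'', r1, r2) = run_tagged F s' xs in (s'', r # r1, r2))"
| "run_tagged F s (Inr p # xs) =
     (let (s', r) = F s p; (s'', r1, r2) = run_tagged F s' xs in (s'', r1, r # r2))"

definition commute :: "('s \<Rightarrow> 'op \<Rightarrow> 's \<times> 'r) \<Rightarrow> 's \<Rightarrow> 'op list \<Rightarrow> 'op list \<Rightarrow> bool" where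
  "commute F s \<rho>1 \<rho>2 \<longleftrightarrow>
     (\<forall>x \<in> shuffles (map Inl \<rho>1) (map Inr \<rho>2). \<forall>y \<in> shuffles (map Inl \<rho>1) (map Inr \<rho>2).
        run_tagged F s x = run_tagged F s y)"

(* ===== Events at clients (the server may be Byzantine: it may send arbitrary messages) ===== *)

datatype 'op ev =
    Invoke nat 'op
  | Reply nat "('op \<times> nat \<times> 'op sig) list"
  | Broadcast nat 'op nat "'op hv" zflag "'op sig" nat      (* C_i receives <broadcast,p,q,h,z,phi,j> *)

fun ev_client :: "'op ev \<Rightarrow> nat" where
  "ev_client (Invoke i _) = i"
| "ev_client (Reply i _) = i"
| "ev_client (Broadcast i _ _ _ _ _ _) = i"

fun inv_op :: "'op ev \<Rightarrow> 'op option" where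
  "inv_op (Invoke _ p) = Some p"
| "inv_op _ = None"

(* what a client step does, observably:
   AInv p              invocation event of p (in the history);
   ACommit p r l h z   client commits p with sequence number l and outputs response r (None = bottom);
   AConfirm p q j      client confirms p (broadcast passing all checks);
   ANone               nothing (e.g. client halts / is halted) *)
datatype ('op, 'r) act = AInv 'op | ACommit 'op "'r option" nat "'op hv" zflag
  | AConfirm 'op nat nat | ANone

record ('op, 's) cst =
  cu :: "'op option"
  cc :: nat
  cH :: "nat \<Rightarrow> 'op hv option"
  cZ :: "nat \<Rightarrow> zflag option"
  cs :: 's
  chalt :: bool

definition init_cst :: "'s \<Rightarrow> ('op, 's) cst" where
  "init_cst s0 = \<lparr>cu = None, cc = 0, cH = [0 \<mapsto> HNull], cZ = Map.empty, cs = s0, chalt = False\<rparr>"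

(* the loop of step (2): entries of omega starting at position l; None = halt;
   result: updated H, gamma, mu *)
fun rloop :: "(nat \<times> 'op smsg) set \<Rightarrow> nat \<Rightarrow> nat \<Rightarrow> (nat \<Rightarrow> 'op hv option) \<Rightarrow> (nat \<Rightarrow> zflag option)
      \<Rightarrow> ('op \<times> nat \<times> 'op sig) list \<Rightarrow> ((nat \<Rightarrow> 'op hv option) \<times> 'op list \<times> 'op list) option" where
  "rloop sg i l H Z [] = Some (H, [], [])"
| "rloop sg i l H Z ((p, j, \<tau>) # rest) =
     (if \<not> verify sg j \<tau> (SInvoke p j) then None
      else (let hx = Hash (the (H (l - 1))) p l j in
        if H l \<noteq> None \<and> H l \<noteq> Some hx then None
        else (let H' = (if H l = None then H(l \<mapsto> hx) else H) in
          (case rloop sg i (Suc l) H' Z rest of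
             None \<Rightarrow> None
           | Some (H'', \<gamma>, \<mu>) \<Rightarrow>
               Some (H'', if j \<noteq> i then p # \<gamma> else \<gamma>,
                          if j = i \<and> Z l = Some Success then p # \<mu> else \<mu>)))))"

(* one step of a COP client: new state, observable action, messages signed in this step *)
definition cstep :: "('s \<Rightarrow> 'op \<Rightarrow> 's \<times> 'r) \<Rightarrow> (nat \<times> 'op smsg) set \<Rightarrow> 'op ev \<Rightarrow> ('op, 's) cst
      \<Rightarrow> ('op, 's) cst \<times> ('op, 'r) act \<times> 'op smsg list" where
  "cstep F sg e st =
    (let halt = (st\<lparr>chalt := True\<rparr>, ANone, []) in
     if chalt st then
       (case e of Invoke i p \<Rightarrow> (st\<lparr>cu := Some p\<rparr>, AInv p, []) | _ \<Rightarrow> (st, ANone, []))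
     else (case e of
       Invoke i p \<Rightarrow> (st\<lparr>cu := Some p\<rparr>, AInv p, [SInvoke p i])
     | Reply i \<omega> \<Rightarrow>
         (case rloop sg i (Suc (cc st)) (cH st) (cZ st) \<omega> of
            None \<Rightarrow> halt
          | Some (H', \<gamma>, \<mu>) \<Rightarrow>
              (if \<omega> = [] \<or> Some (fst (last \<omega>)) \<noteq> cu st \<or> fst (snd (last \<omega>)) \<noteq> i then halt
               else (let u = the (cu st); l = cc st + length \<omega>; a = F_seq F (cs st) \<mu> in
                 if commute F a [u] \<gamma> then
                   (st\<lparr>cH := H', cZ := (cZ st)(l \<mapsto> Success), cu := None\<rparr>,
                    ACommit u (Some (snd (F a u))) l (the (H' l)) Success,
                    [SCommit u l (the (H' l)) Success])
                 else
                   (st\<lparr>cH := H', cZ := (cZ st)(l \<mapsto> Abort), cu := None\<rparr>,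
                    ACommit u None l (the (H' l)) Abort,
                    [SCommit u l (the (H' l)) Abort]))))
     | Broadcast i p q h z \<phi> j \<Rightarrow>
         (if q = Suc (cc st) \<and> verify sg j \<phi> (SCommit p q h z) then
            (let H' = (if cH st q = None then (cH st)(q \<mapsto> Hash (the (cH st (q - 1))) p q j) else cH st) in
             if H' q \<noteq> Some h then halt
             else (st\<lparr>cH := H', cs := (if z = Success then fst (F (cs st) p) else cs st),
                      cc := Suc (cc st)\<rparr>, AConfirm p q j, []))
          else halt)))"

(* executing a (finite) sequence of client events; records (event, client state before, action) *)
fun runs :: "('s \<Rightarrow> 'op \<Rightarrow> 's \<times> 'r) \<Rightarrow> (nat \<Rightarrow> ('op, 's) cst) \<Rightarrow> (nat \<times> 'op smsg) set \<Rightarrow> 'op ev list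
      \<Rightarrow> ('op ev \<times> ('op, 's) cst \<times> ('op, 'r) act) list" where
  "runs F st sg [] = []"
| "runs F st sg (e # es) =
     (let i = ev_client e; (st', a, ms) = cstep F sg e (st i) in
      (e, st i, a) # runs F (st(i := st')) (sg \<union> (\<lambda>m. (i, m)) ` set ms) es)"

definition trace :: "('s \<Rightarrow> 'op \<Rightarrow> 's \<times> 'r) \<Rightarrow> 's \<Rightarrow> 'op ev list \<Rightarrow> ('op ev \<times> ('op, 's) cst \<times> ('op, 'r) act) list" where
  "trace F s0 E = runs F (\<lambda>_. init_cst s0) {} E"

definition well_formed :: "nat \<Rightarrow> 'op ev list \<Rightarrow> ('op ev \<times> ('op, 's) cst \<times> ('op, 'r) act) list \<Rightarrow> bool" where
  "well_formed n E T \<longleftrightarrow>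
     (\<forall>e \<in> set E. ev_client e \<in> {1..n}) \<and>
     (\<forall>(e, st, a) \<in> set T. inv_op e \<noteq> None \<longrightarrow> cu st = None) \<and>
     distinct (List.map_filter inv_op E)"

fun commit_of :: "('op, 'r) act \<Rightarrow> ('op \<times> nat) option" where
  "commit_of (ACommit p r l h z) = Some (p, l)"
| "commit_of _ = None"

fun conf_of :: "('op, 'r) act \<Rightarrow> ('op \<times> nat \<times> nat) option" where
  "conf_of (AConfirm p q j) = Some (p, q, j)"
| "conf_of _ = None"

definition commits :: "('op ev \<times> ('op, 's) cst \<times> ('op, 'r) act) list \<Rightarrow> nat \<Rightarrow> ('op \<times> nat) list" where
  "commits T i = List.map_filter (\<lambda>(e, st, a). if ev_client e = i then commit_of a else None) T"

definition confs :: "('op ev \<times> ('op, 's) cst \<times> ('op, 'r) act) list \<Rightarrow> nat \<Rightarrow> ('op \<times> nat \<times> nat) list" where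
  "confs T k = List.map_filter (\<lambda>(e, st, a). if ev_client e = k then conf_of a else None) T"

definition confirmed_by :: "('op ev \<times> ('op, 's) cst \<times> ('op, 'r) act) list \<Rightarrow> nat \<Rightarrow> 'op \<Rightarrow> bool" where
  "confirmed_by T k p \<longleftrightarrow> p \<in> set (map fst (confs T k))"

definition conf_commits :: "('op ev \<times> ('op, 's) cst \<times> ('op, 'r) act) list \<Rightarrow> nat \<Rightarrow> ('op \<times> nat) set" where
  "conf_commits T i = {(p, l). (p, l) \<in> set (commits T i) \<and> (\<exists>k. confirmed_by T k p)}"

(* pi_seq T i pi: pi is (a valid choice of) the sequence pi_i *)
definition pi_seq :: "('op ev \<times> ('op, 's) cst \<times> ('op, 'r) act) list \<Rightarrow> nat \<Rightarrow> 'op list \<Rightarrow> bool" where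
  "pi_seq T i \<pi> \<longleftrightarrow>
     (\<exists>p l k. (p, l) \<in> conf_commits T i \<and> (\<forall>(p', l') \<in> conf_commits T i. l' \<le> l) \<and>
        confirmed_by T k p \<and>
        \<pi> = (takeWhile (\<lambda>x. x \<noteq> p) (map fst (confs T k)) @ [p])
            @ map fst (sort_key snd (filter (\<lambda>(p', l'). l < l') (commits T i))))
   \<or> (conf_commits T i = {} \<and> \<pi> = map fst (sort_key snd (commits T i)))"

(* history sigma: invocation events and response (completion) events *)
definition inv_at :: "('op ev \<times> ('op, 's) cst \<times> ('op, 'r) act) list \<Rightarrow> nat \<Rightarrow> 'op \<Rightarrow> bool" where
  "inv_at T t p \<longleftrightarrow> t < length T \<and> snd (snd (T ! t)) = AInv p"

definition resp_at :: "('op ev \<times> ('op, 's) cst \<times> ('op, 'r) act) list \<Rightarrow> nat \<Rightarrow> 'op \<Rightarrow> bool" where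
  "resp_at T t p \<longleftrightarrow> t < length T \<and> (\<exists>r l h z. snd (snd (T ! t)) = ACommit p r l h z)"

definition rt_before :: "('op ev \<times> ('op, 's) cst \<times> ('op, 'r) act) list \<Rightarrow> 'op \<Rightarrow> 'op \<Rightarrow> bool" where
  "rt_before T p p' \<longleftrightarrow> (\<exists>t t'. t < t' \<and> resp_at T t p \<and> inv_at T t' p')"

definition appears_before :: "'op list \<Rightarrow> 'op \<Rightarrow> 'op \<Rightarrow> bool" where
  "appears_before xs p p' \<longleftrightarrow> (\<exists>a b. a < b \<and> b < length xs \<and> xs ! a = p \<and> xs ! b = p')"

end

theory Submission
  imports Defs
begin

lemma cstep_cases:
 assumes A: "cstep F sg e st = (st', a, ms)"
 shows "
 (chalt st \<and> ms = [] \<and> cH st' = cH st \<and> cc st' = cc st \<and> chalt st' \<and> (a = ANone \<or> (\<exists>i p. e = Invoke i p \<and> a = AInv p)))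
 \<or> (\<not>chalt st \<and> st' = st\<lparr>chalt := True\<rparr> \<and> a = ANone \<and> ms = [])
 \<or> (\<not>chalt st \<and> (\<exists>i p. e = Invoke i p \<and> st' = st\<lparr>cu := Some p\<rparr> \<and> a = AInv p \<and> ms = [SInvoke p i]))
 \<or> (\<not>chalt st \<and> (\<exists>i \<omega> H' \<gamma> \<mu> u r z. e = Reply i \<omega> \<and> rloop sg i (Suc (cc st)) (cH st) (cZ st) \<omega> = Some (H', \<gamma>, \<mu>) \<and> \<omega> \<noteq> [] \<and> cu st = Some u \<and> fst (last \<omega>) = u \<and> fst (snd (last \<omega>)) = i \<and> cH st' = H' \<and> cc st' = cc st \<and> cu st' = None \<and> \<not> chalt st' \<and> a = ACommit u r (cc st + length \<omega>) (the (H' (cc st + length \<omega>))) z \<and> ms = [SCommit u (cc st + length \<omega>) (the (H' (cc st + length \<omega>))) z]))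
 \<or> (\<not>chalt st \<and> (\<exists>i p q h z \<phi> j. e = Broadcast i p q h z \<phi> j \<and> q = Suc (cc st) \<and> verify sg j \<phi> (SCommit p q h z) \<and> cH st' = (if cH st q = None then (cH st)(q \<mapsto> Hash (the (cH st (q-1))) p q j) else cH st) \<and> cH st' q = Some h \<and> cc st' = q \<and> cu st' = cu st \<and> \<not> chalt st' \<and> a = AConfirm p q j \<and> ms = []))"
  (is "?C1 \<or> ?C2 \<or> ?C3 \<or> ?C4 \<or> ?C5")
proof (cases "chalt st")
  case True
  then have ?C1 using A by (cases e) (auto simp: cstep_def)
  then show ?thesis by blast
next
  case nh: False
  show ?thesis
  proof (cases e)
    case (Invoke i p)
    then have ?C3 using A nh by (auto simp: cstep_def)
    then show ?thesis by blast
  next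
    case (Reply i \<omega>)
    show ?thesis
    proof (cases "rloop sg i (Suc (cc st)) (cH st) (cZ st) \<omega>")
      case None
      then have ?C2 using A nh Reply by (auto simp: cstep_def)
      then show ?thesis by blast
    next
      case (Some res)
      then obtain H' \<gamma> \<mu> where R: "rloop sg i (Suc (cc st)) (cH st) (cZ st) \<omega> = Some (H', \<gamma>, \<mu>)"
        by (cases res) auto
      show ?thesis
      proof (cases "\<omega> = [] \<or> Some (fst (last \<omega>)) \<noteq> cu st \<or> fst (snd (last \<omega>)) \<noteq> i")
        case True
        then have ?C2 using A nh Reply R by (auto simp: cstep_def)
        then show ?thesis by blast
      next
        case False
        then have f: "\<omega> \<noteq> []" "cu st = Some (fst (last \<omega>))" "fst (snd (last \<omega>)) = i" by auto
        have E: "cstep F sg e st = (let u = the (cu st); l = cc st + length \<omega>; a = F_seq F (cs st) \<mu> in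
                 if commute F a [u] \<gamma> then
                   (st\<lparr>cH := H', cZ := (cZ st)(l \<mapsto> Success), cu := None\<rparr>,
                    ACommit u (Some (snd (F a u))) l (the (H' l)) Success,
                    [SCommit u l (the (H' l)) Success])
                 else
                   (st\<lparr>cH := H', cZ := (cZ st)(l \<mapsto> Abort), cu := None\<rparr>,
                    ACommit u None l (the (H' l)) Abort,
                    [SCommit u l (the (H' l)) Abort]))"
          using nh Reply R False unfolding cstep_def by (simp add: Let_def)
        have ?C4
        proof (cases "commute F (F_seq F (cs st) \<mu>) [the (cu st)] \<gamma>")
          case True
          then show ?thesis using A E f R nh Reply by (auto simp: Let_def)
        next
          case False
          then show ?thesis using A E f R nh Reply by (auto simp: Let_def)
        qed
        then show ?thesis by blast
      qed
    qed
  next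
    case (Broadcast i p q h z \<phi> j)
    show ?thesis
    proof (cases "q = Suc (cc st) \<and> verify sg j \<phi> (SCommit p q h z)")
      case False
      have "cstep F sg e st = (st\<lparr>chalt := True\<rparr>, ANone, [])"
        using nh False unfolding cstep_def Broadcast by (simp add: Let_def)
      then have ?C2 using A nh by auto
      then show ?thesis by blast
    next
      case c: True
      define H' where "H' = (if cH st q = None then (cH st)(q \<mapsto> Hash (the (cH st (q - 1))) p q j) else cH st)"
      have E: "cstep F sg e st = (if H' q \<noteq> Some h then (st\<lparr>chalt := True\<rparr>, ANone, [])
             else (st\<lparr>cH := H', cs := (if z = Success then fst (F (cs st) p) else cs st),
                      cc := Suc (cc st)\<rparr>, AConfirm p q j, []))"
        unfolding cstep_def Broadcast H'_def Let_def ev.case if_P[OF c] if_not_P[OF nh] by (rule refl)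
      show ?thesis
      proof (cases "H' q = Some h")
        case False
        then have ?C2 using A E nh by auto
        then show ?thesis by blast
      next
        case True
        then have ?C5 using A E nh c Broadcast unfolding H'_def by auto
        then show ?thesis by blast
      qed
    qed
  qed
qed

fun hops :: "'op hv \<Rightarrow> ('op \<times> nat) set" where
  "hops HNull = {}"
| "hops (Hash x p l j) = insert (p, j) (hops x)"

definition IS :: "(nat \<times> 'op smsg) set \<Rightarrow> ('op \<times> nat) set" where
  "IS sg = {(p, j). (j, SInvoke p j) \<in> sg}"

definition InvH :: "(nat \<times> 'op smsg) set \<Rightarrow> (nat \<Rightarrow> 'op hv option) \<Rightarrow> bool" where
  "InvH sg H \<longleftrightarrow> H 0 = Some HNull \<and>
     (\<forall>q h. H q = Some h \<longrightarrow> q > 0 \<longrightarrow> (\<exists>x p j. h = Hash x p q j \<and> H (q - 1) = Some x)) \<and>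
     (\<forall>q h. H q = Some h \<longrightarrow> hops h \<subseteq> IS sg)"

lemma rloop_inv:
  "rloop sg i l0 H Z \<omega> = Some (H'', \<gamma>, \<mu>) \<Longrightarrow> InvH sg H \<Longrightarrow> l0 > 0 \<Longrightarrow> H (l0 - 1) \<noteq> None \<Longrightarrow>
   InvH sg H'' \<and> H \<subseteq>\<^sub>m H'' \<and>
   (\<omega> \<noteq> [] \<longrightarrow> (\<exists>x. H'' (l0 + length \<omega> - 1) = Some (Hash x (fst (last \<omega>)) (l0 + length \<omega> - 1) (fst (snd (last \<omega>))))))"
proof (induction \<omega> arbitrary: l0 H H'' \<gamma> \<mu>)
  case Nil
  then show ?case by auto
next
  case (Cons e rest)
  obtain p j \<tau> where e: "e = (p, j, \<tau>)" by (cases e) auto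
  obtain x0 where x0: "H (l0 - 1) = Some x0" using Cons.prems by auto
  define hx where "hx = Hash (the (H (l0 - 1))) p l0 j"
  define H' where "H' = (if H l0 = None then H(l0 \<mapsto> hx) else H)"
  have v: "verify sg j \<tau> (SInvoke p j)" and nc: "\<not> (H l0 \<noteq> None \<and> H l0 \<noteq> Some hx)"
    using Cons.prems(1) unfolding e hx_def by (auto simp: Let_def split: if_splits)
  have eq: "rloop sg i l0 H Z (e # rest) = (case rloop sg i (Suc l0) H' Z rest of None \<Rightarrow> None | Some (H2, g, m) \<Rightarrow> Some (H2, if j \<noteq> i then p # g else g, if j = i \<and> Z l0 = Some Success then p # m else m))"
    using v nc unfolding e H'_def hx_def by (auto simp: Let_def)
  obtain H2 g2 m2 where R: "rloop sg i (Suc l0) H' Z rest = Some (H2, g2, m2)" and H2: "H'' = H2"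
    using Cons.prems(1) unfolding eq by (auto split: option.splits)
  have H'l0: "H' l0 = Some hx" using nc unfolding H'_def by auto
  have le: "H \<subseteq>\<^sub>m H'" unfolding H'_def by (auto simp: map_le_def)
  have sig: "(p, j) \<in> IS sg" using v unfolding verify_def IS_def by auto
  have hxe: "hx = Hash x0 p l0 j" unfolding hx_def using x0 by simp
  have inv': "InvH sg H'"
  proof -
    have a: "H' 0 = Some HNull" using Cons.prems(2,3) unfolding InvH_def H'_def by auto
    have b: "\<forall>q h. H' q = Some h \<longrightarrow> q > 0 \<longrightarrow> (\<exists>x p j. h = Hash x p q j \<and> H' (q - 1) = Some x)"
    proof (intro allI impI)
      fix q h assume q: "H' q = Some h" "q > 0"
      show "\<exists>x p j. h = Hash x p q j \<and> H' (q - 1) = Some x"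
      proof (cases "q = l0")
        case True
        then have "h = hx" using q H'l0 by simp
        moreover have "H' (q - 1) = Some x0" using le x0 True by (auto simp: map_le_def dom_def)
        ultimately show ?thesis using hxe True by auto
      next
        case False
        then have "H q = Some h" using q unfolding H'_def by (auto split: if_splits)
        then obtain x p j where "h = Hash x p q j" "H (q - 1) = Some x"
          using Cons.prems(2) q(2) unfolding InvH_def by blast
        moreover have "H' (q - 1) = Some x" using le \<open>H (q - 1) = Some x\<close> by (auto simp: map_le_def dom_def)
        ultimately show ?thesis by blast
      qed
    qed
    have c: "\<forall>q h. H' q = Some h \<longrightarrow> hops h \<subseteq> IS sg"
    proof (intro allI impI)
      fix q h assume q: "H' q = Some h"
      show "hops h \<subseteq> IS sg"
      proof (cases "q = l0")
        case True
        then have "h = hx" using q H'l0 by simp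
        moreover have "hops x0 \<subseteq> IS sg" using Cons.prems(2) x0 unfolding InvH_def by blast
        ultimately show ?thesis using hxe sig by auto
      next
        case False
        then have "H q = Some h" using q unfolding H'_def by (auto split: if_splits)
        then show ?thesis using Cons.prems(2) unfolding InvH_def by blast
      qed
    qed
    show ?thesis using a b c unfolding InvH_def by blast
  qed
  have IH: "InvH sg H2 \<and> H' \<subseteq>\<^sub>m H2 \<and> (rest \<noteq> [] \<longrightarrow> (\<exists>x. H2 (Suc l0 + length rest - 1) = Some (Hash x (fst (last rest)) (Suc l0 + length rest - 1) (fst (snd (last rest))))))"
    using Cons.IH[OF R inv'] H'l0 by auto
  have le2: "H \<subseteq>\<^sub>m H2" using le IH map_le_trans by blast
  have last: "\<exists>x. H2 (l0 + length (e # rest) - 1) = Some (Hash x (fst (last (e # rest))) (l0 + length (e # rest) - 1) (fst (snd (last (e # rest)))))"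
  proof (cases "rest = []")
    case True
    have "H2 l0 = Some hx" using IH H'l0 by (auto simp: map_le_def dom_def)
    then show ?thesis using True hxe e by auto
  next
    case False
    then show ?thesis using IH by auto
  qed
  show ?case using IH le2 last H2 by auto
qed

lemma InvH_mono: "InvH sg H \<Longrightarrow> sg \<subseteq> sg' \<Longrightarrow> InvH sg' H"
  unfolding InvH_def IS_def by blast

lemma IS_insert_commit: "IS (insert (c, SCommit p l h z) sg) = IS sg"
  unfolding IS_def by auto

lemma InvH_upd:
  assumes I: "InvH sg H" and x0: "H (q - 1) = Some x0" and q: "q > 0" and pj: "(p, j) \<in> IS sg" and N: "H q = None"
  shows "InvH sg (H(q \<mapsto> Hash x0 p q j))"
proof -
  have h0: "hops x0 \<subseteq> IS sg" using I x0 unfolding InvH_def by blast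
  have a: "(H(q \<mapsto> Hash x0 p q j)) 0 = Some HNull" using I q unfolding InvH_def by auto
  have b: "\<forall>q' h. (H(q \<mapsto> Hash x0 p q j)) q' = Some h \<longrightarrow> q' > 0 \<longrightarrow> (\<exists>x pp jj. h = Hash x pp q' jj \<and> (H(q \<mapsto> Hash x0 p q j)) (q' - 1) = Some x)"
  proof (intro allI impI)
    fix q' h assume A: "(H(q \<mapsto> Hash x0 p q j)) q' = Some h" "q' > 0"
    show "\<exists>x pp jj. h = Hash x pp q' jj \<and> (H(q \<mapsto> Hash x0 p q j)) (q' - 1) = Some x"
    proof (cases "q' = q")
      case True
      have "(H(q \<mapsto> Hash x0 p q j)) (q - 1) = Some x0" using x0 q by auto
      then show ?thesis using A True by (intro exI[of _ x0] exI[of _ p] exI[of _ j]) auto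
    next
      case False
      then have "H q' = Some h" using A by auto
      then obtain x p1 j1 where "h = Hash x p1 q' j1" "H (q' - 1) = Some x" using I A(2) unfolding InvH_def by blast
      moreover have "q' - 1 \<noteq> q" using \<open>H (q' - 1) = Some x\<close> N by auto
      ultimately show ?thesis by auto
    qed
  qed
  have c: "\<forall>q' h. (H(q \<mapsto> Hash x0 p q j)) q' = Some h \<longrightarrow> hops h \<subseteq> IS sg"
    using I h0 pj unfolding InvH_def by auto
  show ?thesis using a b c unfolding InvH_def by blast
qed

definition GInv :: "'op ev list \<Rightarrow> nat \<Rightarrow> (nat \<Rightarrow> ('op, 's) cst) \<Rightarrow> (nat \<times> 'op smsg) set \<Rightarrow> bool" where
 "GInv E t st sg \<longleftrightarrow>
  (\<forall>c. InvH sg (cH (st c))) \<and>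
  (\<forall>c. cH (st c) (cc (st c)) \<noteq> None) \<and>
  (\<forall>j p l h z. (j, SCommit p l h z) \<in> sg \<longrightarrow> (\<exists>x. h = Hash x p l j) \<and> hops h \<subseteq> IS sg) \<and>
  (\<forall>c p. \<not> chalt (st c) \<and> cu (st c) = Some p \<longrightarrow> (c, SInvoke p c) \<in> sg) \<and>
  (\<forall>c p l h z. (c, SCommit p l h z) \<in> sg \<longrightarrow> cu (st c) = Some p \<longrightarrow> chalt (st c)) \<and>
  (\<forall>c p l h z l' h' z'. (c, SCommit p l h z) \<in> sg \<longrightarrow> (c, SCommit p l' h' z') \<in> sg \<longrightarrow> l = l' \<and> h = h' \<and> z = z') \<and>
  (\<forall>j p. (j, SInvoke p j) \<in> sg \<longrightarrow> (\<exists>t0 < t. E ! t0 = Invoke j p))"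

lemma GInv_halt:
  assumes G: "GInv E t st sg" and h: "chalt s1" "cH s1 = cH (st c0)" "cc s1 = cc (st c0)"
  shows "GInv E (Suc t) (st(c0 := s1)) sg"
proof -
  note GG = G[unfolded GInv_def]
  show ?thesis unfolding GInv_def
  proof (intro conjI allI impI)
    fix c show "InvH sg (cH ((st(c0 := s1)) c))" using GG[THEN conjunct1] h by auto
  next
    fix c show "cH ((st(c0 := s1)) c) (cc ((st(c0 := s1)) c)) \<noteq> None"
      using GG[THEN conjunct2, THEN conjunct1] h by auto
  next
    fix j p l hh z assume "(j, SCommit p l hh z) \<in> sg"
    then show "\<exists>x. hh = Hash x p l j" "hops hh \<subseteq> IS sg"
      using GG[THEN conjunct2, THEN conjunct2, THEN conjunct1] by blast+
  next
    fix c p assume "\<not> chalt ((st(c0 := s1)) c) \<and> cu ((st(c0 := s1)) c) = Some p"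
    then show "(c, SInvoke p c) \<in> sg"
      using GG[THEN conjunct2, THEN conjunct2, THEN conjunct2, THEN conjunct1] h by (auto split: if_splits)
  next
    fix c p l hh z assume a: "(c, SCommit p l hh z) \<in> sg" "cu ((st(c0 := s1)) c) = Some p"
    have G5: "\<And>c p l hh z. (c, SCommit p l hh z) \<in> sg \<Longrightarrow> cu (st c) = Some p \<Longrightarrow> chalt (st c)"
      using GG[THEN conjunct2, THEN conjunct2, THEN conjunct2, THEN conjunct2, THEN conjunct1] by blast
    show "chalt ((st(c0 := s1)) c)"
    proof (cases "c = c0")
      case True then show ?thesis using h by simp
    next
      case False then show ?thesis using G5[OF a(1)] a(2) by simp
    qed
  next
    fix c p l hh z l' h' z' assume "(c, SCommit p l hh z) \<in> sg" "(c, SCommit p l' h' z') \<in> sg"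
    then show "l = l'" "hh = h'" "z = z'"
      using GG[THEN conjunct2, THEN conjunct2, THEN conjunct2, THEN conjunct2, THEN conjunct2, THEN conjunct1] by blast+
  next
    fix j p assume "(j, SInvoke p j) \<in> sg"
    then show "\<exists>t0<Suc t. E ! t0 = Invoke j p"
      using GG[THEN conjunct2, THEN conjunct2, THEN conjunct2, THEN conjunct2, THEN conjunct2, THEN conjunct2] less_SucI by blast
  qed
qed

lemma GInv_step:
  assumes G: "GInv E t st sg" and tl: "t < length E" and e: "e = E ! t"
    and uniq: "\<And>t0 p. t0 < t \<Longrightarrow> inv_op e = Some p \<Longrightarrow> inv_op (E ! t0) \<noteq> Some p"
    and S: "cstep F sg e (st (ev_client e)) = (s1, a, ms)"
  shows "GInv E (Suc t) (st(ev_client e := s1)) (sg \<union> (\<lambda>m. (ev_client e, m)) ` set ms)"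
proof -
  define c0 where "c0 = ev_client e"
  define s where "s = st c0"
  note GG = G[unfolded GInv_def]
  have G1: "\<And>c. InvH sg (cH (st c))"
    using GG[THEN conjunct1] by blast
  have G2: "\<And>c. cH (st c) (cc (st c)) \<noteq> None"
    using GG[THEN conjunct2, THEN conjunct1] by blast
  have G3: "\<And>j p l h z. (j, SCommit p l h z) \<in> sg \<Longrightarrow> (\<exists>x. h = Hash x p l j) \<and> hops h \<subseteq> IS sg"
    using GG[THEN conjunct2, THEN conjunct2, THEN conjunct1] by blast
  have G4: "\<And>c p. \<not> chalt (st c) \<Longrightarrow> cu (st c) = Some p \<Longrightarrow> (c, SInvoke p c) \<in> sg"
    using GG[THEN conjunct2, THEN conjunct2, THEN conjunct2, THEN conjunct1] by blast
  have G5: "\<And>c p l h z. (c, SCommit p l h z) \<in> sg \<Longrightarrow> cu (st c) = Some p \<Longrightarrow> chalt (st c)"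
    using GG[THEN conjunct2, THEN conjunct2, THEN conjunct2, THEN conjunct2, THEN conjunct1] by blast
  have G6: "\<And>c p l h z l' h' z'. (c, SCommit p l h z) \<in> sg \<Longrightarrow> (c, SCommit p l' h' z') \<in> sg \<Longrightarrow> l = l' \<and> h = h' \<and> z = z'"
    using GG[THEN conjunct2, THEN conjunct2, THEN conjunct2, THEN conjunct2, THEN conjunct2, THEN conjunct1] by blast
  have G7: "\<And>j p. (j, SInvoke p j) \<in> sg \<Longrightarrow> (\<exists>t0 < t. E ! t0 = Invoke j p)"
    using GG[THEN conjunct2, THEN conjunct2, THEN conjunct2, THEN conjunct2, THEN conjunct2, THEN conjunct2] by blast
  have G7': "\<And>j p. (j, SInvoke p j) \<in> sg \<Longrightarrow> (\<exists>t0 < Suc t. E ! t0 = Invoke j p)"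
    using G7 less_SucI by blast
  note C = cstep_cases[OF S[folded c0_def s_def]]
  from C show ?thesis
  proof (elim disjE)
    assume c1: "chalt s \<and> ms = [] \<and> cH s1 = cH s \<and> cc s1 = cc s \<and> chalt s1 \<and> (a = ANone \<or> (\<exists>i p. e = Invoke i p \<and> a = AInv p))"
    show ?thesis using c1 GInv_halt[OF G, of s1 c0] unfolding c0_def s_def by simp
  next
    assume c2: "\<not>chalt s \<and> s1 = s\<lparr>chalt := True\<rparr> \<and> a = ANone \<and> ms = []"
    show ?thesis using c2 GInv_halt[OF G, of s1 c0] unfolding c0_def s_def by simp
  next
    assume "\<not>chalt s \<and> (\<exists>i p. e = Invoke i p \<and> s1 = s\<lparr>cu := Some p\<rparr> \<and> a = AInv p \<and> ms = [SInvoke p i])"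
    then obtain p where nh: "\<not> chalt s" and ei: "e = Invoke c0 p" and s1: "s1 = s\<lparr>cu := Some p\<rparr>"
      and ms: "ms = [SInvoke p c0]" unfolding c0_def by auto
    define sg' where "sg' = insert (c0, SInvoke p c0) sg"
    have sg': "sg \<union> (\<lambda>m. (c0, m)) ` set ms = sg'" unfolding sg'_def ms by auto
    have nocommit: "\<And>l h z. (c0, SCommit p l h z) \<notin> sg"
    proof
      fix l h z assume "(c0, SCommit p l h z) \<in> sg"
      then obtain x where "h = Hash x p l c0" "hops h \<subseteq> IS sg" using G3 by blast
      then have "(c0, SInvoke p c0) \<in> sg" unfolding IS_def by auto
      then obtain t0 where "t0 < t" "E ! t0 = Invoke c0 p" using G7 by blast
      then show False using uniq[of t0 p] ei by simp
    qed
    have "sg \<subseteq> sg'" unfolding sg'_def by auto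
    then have M: "\<And>c. InvH sg' (cH (st c))" using G1 InvH_mono by blast
    have IS': "IS sg \<subseteq> IS sg'" unfolding IS_def sg'_def by auto
    show ?thesis unfolding sg' GInv_def c0_def[symmetric]
    proof (intro conjI allI impI)
      fix c show "InvH sg' (cH ((st(c0 := s1)) c))" using M s1 unfolding s_def by auto
    next
      fix c show "cH ((st(c0 := s1)) c) (cc ((st(c0 := s1)) c)) \<noteq> None" using G2 s1 unfolding s_def by auto
    next
      fix j p l h z assume "(j, SCommit p l h z) \<in> sg'"
      then have "(j, SCommit p l h z) \<in> sg" unfolding sg'_def by auto
      then show "\<exists>x. h = Hash x p l j" using G3 by blast
    next
      fix j p l h z assume "(j, SCommit p l h z) \<in> sg'"
      then have "(j, SCommit p l h z) \<in> sg" unfolding sg'_def by auto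
      then show "hops h \<subseteq> IS sg'" using G3 IS' by blast
    next
      fix c p' assume "\<not> chalt ((st(c0 := s1)) c) \<and> cu ((st(c0 := s1)) c) = Some p'"
      then show "(c, SInvoke p' c) \<in> sg'" using G4 s1 unfolding sg'_def s_def by (auto split: if_splits)
    next
      fix c p' l h z assume a1: "(c, SCommit p' l h z) \<in> sg'" and a2: "cu ((st(c0 := s1)) c) = Some p'"
      have a1': "(c, SCommit p' l h z) \<in> sg" using a1 unfolding sg'_def by auto
      show "chalt ((st(c0 := s1)) c)"
      proof (cases "c = c0")
        case True
        then have "p' = p" using a2 s1 by auto
        then show ?thesis using a1' nocommit True by blast
      next
        case False
        then show ?thesis using G5 a1' a2 by auto
      qed
    next
      fix c p l h z l' h' z'
      assume "(c, SCommit p l h z) \<in> sg'" "(c, SCommit p l' h' z') \<in> sg'"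
      then show "l = l'" "h = h'" "z = z'" using G6[of c p l h z l' h' z'] unfolding sg'_def by auto
    next
      fix j p' assume "(j, SInvoke p' j) \<in> sg'"
      then show "\<exists>t0<Suc t. E ! t0 = Invoke j p'"
        unfolding sg'_def using G7' ei e by auto
    qed
  next
    assume A: "\<not>chalt s \<and> (\<exists>i \<omega> H' \<gamma> \<mu> u r z. e = Reply i \<omega> \<and> rloop sg i (Suc (cc s)) (cH s) (cZ s) \<omega> = Some (H', \<gamma>, \<mu>) \<and> \<omega> \<noteq> [] \<and> cu s = Some u \<and> fst (last \<omega>) = u \<and> fst (snd (last \<omega>)) = i \<and> cH s1 = H' \<and> cc s1 = cc s \<and> cu s1 = None \<and> \<not> chalt s1 \<and> a = ACommit u r (cc s + length \<omega>) (the (H' (cc s + length \<omega>))) z \<and> ms = [SCommit u (cc s + length \<omega>) (the (H' (cc s + length \<omega>))) z])"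
    have nh: "\<not> chalt s" using A by simp
    from A obtain i \<omega> H' \<gamma> \<mu> u r z where X: "e = Reply i \<omega> \<and> rloop sg i (Suc (cc s)) (cH s) (cZ s) \<omega> = Some (H', \<gamma>, \<mu>) \<and> \<omega> \<noteq> [] \<and> cu s = Some u \<and> fst (last \<omega>) = u \<and> fst (snd (last \<omega>)) = i \<and> cH s1 = H' \<and> cc s1 = cc s \<and> cu s1 = None \<and> \<not> chalt s1 \<and> a = ACommit u r (cc s + length \<omega>) (the (H' (cc s + length \<omega>))) z \<and> ms = [SCommit u (cc s + length \<omega>) (the (H' (cc s + length \<omega>))) z]" by blast
    have i: "i = c0" using X unfolding c0_def by auto
    have er: "e = Reply c0 \<omega>"
      and R: "rloop sg c0 (Suc (cc s)) (cH s) (cZ s) \<omega> = Some (H', \<gamma>, \<mu>)" and ne: "\<omega> \<noteq> []"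
      and cu: "cu s = Some u" and lu: "fst (last \<omega>) = u" and li: "fst (snd (last \<omega>)) = c0"
      and s1: "cH s1 = H'" "cc s1 = cc s" "cu s1 = None" "\<not> chalt s1"
      and ms: "ms = [SCommit u (cc s + length \<omega>) (the (H' (cc s + length \<omega>))) z]"
      using X i by simp_all
    define l where "l = cc s + length \<omega>"
    define hl where "hl = the (H' l)"
    have RI: "InvH sg H' \<and> cH s \<subseteq>\<^sub>m H' \<and> (\<exists>x. H' (Suc (cc s) + length \<omega> - 1) = Some (Hash x (fst (last \<omega>)) (Suc (cc s) + length \<omega> - 1) (fst (snd (last \<omega>)))))"
      using rloop_inv[OF R] G1 G2 ne unfolding s_def by auto
    then obtain x where Hl: "H' l = Some (Hash x u l c0)" using lu li unfolding l_def by auto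
    have hl: "hl = Hash x u l c0" unfolding hl_def using Hl by simp
    define sg' where "sg' = insert (c0, SCommit u l hl z) sg"
    have sg': "sg \<union> (\<lambda>m. (c0, m)) ` set ms = sg'" unfolding sg'_def ms l_def hl_def by auto
    have ISeq: "IS sg' = IS sg" unfolding sg'_def by (rule IS_insert_commit)
    have M: "\<And>c. InvH sg' (cH (st c))" using G1 InvH_mono unfolding sg'_def by blast
    have M1: "InvH sg' H'" using RI InvH_mono unfolding sg'_def by blast
    have hlops: "hops hl \<subseteq> IS sg" using RI Hl hl unfolding InvH_def by blast
    have nold: "\<And>l' h' z'. (c0, SCommit u l' h' z') \<notin> sg"
      using G5 cu nh unfolding s_def by blast
    show ?thesis unfolding sg' GInv_def c0_def[symmetric]
    proof (intro conjI allI impI)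
      fix c show "InvH sg' (cH ((st(c0 := s1)) c))" using M M1 s1 by auto
    next
      fix c show "cH ((st(c0 := s1)) c) (cc ((st(c0 := s1)) c)) \<noteq> None"
      proof (cases "c = c0")
        case True
        have "cH s (cc s) \<noteq> None" using G2 unfolding s_def by blast
        then have "H' (cc s) \<noteq> None" using RI by (auto simp: map_le_def dom_def)
        then show ?thesis using True s1 by auto
      qed (use G2 in auto)
    next
      fix j p l' h z' assume "(j, SCommit p l' h z') \<in> sg'"
      then show "\<exists>x. h = Hash x p l' j" using G3 hl unfolding sg'_def by auto
    next
      fix j p l' h z' assume a: "(j, SCommit p l' h z') \<in> sg'"
      show "hops h \<subseteq> IS sg'"
      proof (cases "(j, SCommit p l' h z') \<in> sg")
        case True then show ?thesis using G3[OF True] ISeq by simp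
      next
        case False then have "h = hl" using a unfolding sg'_def by auto
        then show ?thesis using hlops ISeq by simp
      qed
    next
      fix c p' assume "\<not> chalt ((st(c0 := s1)) c) \<and> cu ((st(c0 := s1)) c) = Some p'"
      then show "(c, SInvoke p' c) \<in> sg'" using G4 s1 unfolding sg'_def by (auto split: if_splits)
    next
      fix c p' l' h z' assume a1: "(c, SCommit p' l' h z') \<in> sg'" and a2: "cu ((st(c0 := s1)) c) = Some p'"
      show "chalt ((st(c0 := s1)) c)"
      proof (cases "c = c0")
        case True
        then show ?thesis using a2 s1 by auto
      next
        case False
        then have "(c, SCommit p' l' h z') \<in> sg" using a1 unfolding sg'_def by auto
        then show ?thesis using G5 a2 False by auto
      qed
    next
      fix c p l1 h1 z1 l2 h2 z2
      assume a1: "(c, SCommit p l1 h1 z1) \<in> sg'" and a2: "(c, SCommit p l2 h2 z2) \<in> sg'"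
      have "l1 = l2 \<and> h1 = h2 \<and> z1 = z2"
        using a1 a2 G6[of c p l1 h1 z1 l2 h2 z2] nold unfolding sg'_def by auto
      then show "l1 = l2" "h1 = h2" "z1 = z2" by auto
    next
      fix j p' assume "(j, SInvoke p' j) \<in> sg'"
      then show "\<exists>t0<Suc t. E ! t0 = Invoke j p'"
        unfolding sg'_def using G7' by auto
    qed
  next
    assume "\<not>chalt s \<and> (\<exists>i p q h z \<phi> j. e = Broadcast i p q h z \<phi> j \<and> q = Suc (cc s) \<and> verify sg j \<phi> (SCommit p q h z) \<and> cH s1 = (if cH s q = None then (cH s)(q \<mapsto> Hash (the (cH s (q-1))) p q j) else cH s) \<and> cH s1 q = Some h \<and> cc s1 = q \<and> cu s1 = cu s \<and> \<not> chalt s1 \<and> a = AConfirm p q j \<and> ms = [])"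
    then obtain p q h z \<phi> j where nh: "\<not> chalt s" and q: "q = Suc (cc s)"
      and v: "verify sg j \<phi> (SCommit p q h z)"
      and s1: "cH s1 = (if cH s q = None then (cH s)(q \<mapsto> Hash (the (cH s (q-1))) p q j) else cH s)"
        "cH s1 q = Some h" "cc s1 = q" "cu s1 = cu s" "\<not> chalt s1"
      and ms: "ms = []" by blast
    have sg': "sg \<union> (\<lambda>m. (c0, m)) ` set ms = sg" using ms by simp
    have sig: "(j, SCommit p q h z) \<in> sg" using v unfolding verify_def by auto
    then obtain x where "h = Hash x p q j" "hops h \<subseteq> IS sg" using G3 by blast
    then have pj: "(p, j) \<in> IS sg" by auto
    obtain x0 where x0: "cH s (q - 1) = Some x0" using G2 q unfolding s_def by auto
    have I1: "InvH sg (cH s1)"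
    proof (cases "cH s q = None")
      case True
      have "cH s1 = (cH s)(q \<mapsto> Hash x0 p q j)" using True s1(1) x0 by simp
      then show ?thesis using InvH_upd[OF G1[of c0, folded s_def] x0 _ pj True] q by simp
    next
      case False
      have "cH s1 = cH s" unfolding s1(1) by (simp only: False if_False)
      then show ?thesis using G1[of c0] unfolding s_def by simp
    qed
    show ?thesis unfolding sg' GInv_def c0_def[symmetric]
    proof (intro conjI allI impI)
      fix c show "InvH sg (cH ((st(c0 := s1)) c))" using G1 I1 by auto
    next
      fix c show "cH ((st(c0 := s1)) c) (cc ((st(c0 := s1)) c)) \<noteq> None" using G2 s1 by auto
    next
      fix j p l' h z' assume "(j, SCommit p l' h z') \<in> sg"
      then show "\<exists>x. h = Hash x p l' j" using G3 by blast
    next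
      fix j p l' h z' assume "(j, SCommit p l' h z') \<in> sg"
      then show "hops h \<subseteq> IS sg" using G3 by blast
    next
      fix c p' assume "\<not> chalt ((st(c0 := s1)) c) \<and> cu ((st(c0 := s1)) c) = Some p'"
      then show "(c, SInvoke p' c) \<in> sg" using G4 s1 nh unfolding s_def by (auto split: if_splits)
    next
      fix c p' l' h z' assume a1: "(c, SCommit p' l' h z') \<in> sg" and a2: "cu ((st(c0 := s1)) c) = Some p'"
      show "chalt ((st(c0 := s1)) c)"
      proof (cases "c = c0")
        case True
        then have "cu s = Some p'" using a2 s1 by auto
        then have "chalt s" using G5 a1 True unfolding s_def by blast
        then show ?thesis using nh by blast
      next
        case False
        then show ?thesis using G5 a1 a2 by auto
      qed
    next
      fix c p l1 h1 z1 l2 h2 z2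
      assume "(c, SCommit p l1 h1 z1) \<in> sg" "(c, SCommit p l2 h2 z2) \<in> sg"
      then show "l1 = l2" "h1 = h2" "z1 = z2" using G6[of c p l1 h1 z1 l2 h2 z2] by auto
    next
      fix j p' assume "(j, SInvoke p' j) \<in> sg"
      then show "\<exists>t0<Suc t. E ! t0 = Invoke j p'" using G7' by auto
    qed
  qed
qed

lemma step_mono:
  assumes G: "GInv E t st sg" and S: "cstep F sg e (st (ev_client e)) = (s1, a, ms)"
  shows "cH (st (ev_client e)) \<subseteq>\<^sub>m cH s1 \<and> cc (st (ev_client e)) \<le> cc s1"
proof -
  define s where "s = st (ev_client e)"
  have G1: "InvH sg (cH s)" and G2: "cH s (cc s) \<noteq> None"
    using G unfolding GInv_def s_def by simp_all
  have "cH s \<subseteq>\<^sub>m cH s1 \<and> cc s \<le> cc s1"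
  using cstep_cases[OF S[folded s_def]]
  proof (elim disjE)
    assume "\<not>chalt s \<and> (\<exists>i \<omega> H' \<gamma> \<mu> u r z. e = Reply i \<omega> \<and> rloop sg i (Suc (cc s)) (cH s) (cZ s) \<omega> = Some (H', \<gamma>, \<mu>) \<and> \<omega> \<noteq> [] \<and> cu s = Some u \<and> fst (last \<omega>) = u \<and> fst (snd (last \<omega>)) = i \<and> cH s1 = H' \<and> cc s1 = cc s \<and> cu s1 = None \<and> \<not> chalt s1 \<and> a = ACommit u r (cc s + length \<omega>) (the (H' (cc s + length \<omega>))) z \<and> ms = [SCommit u (cc s + length \<omega>) (the (H' (cc s + length \<omega>))) z])"
    then obtain i \<omega> H' \<gamma> \<mu> where R: "rloop sg i (Suc (cc s)) (cH s) (cZ s) \<omega> = Some (H', \<gamma>, \<mu>)"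
      and "cH s1 = H'" "cc s1 = cc s" by blast
    then show ?thesis using rloop_inv[OF R G1] G2 by auto
  next
    assume "\<not>chalt s \<and> (\<exists>i p q h z \<phi> j. e = Broadcast i p q h z \<phi> j \<and> q = Suc (cc s) \<and> verify sg j \<phi> (SCommit p q h z) \<and> cH s1 = (if cH s q = None then (cH s)(q \<mapsto> Hash (the (cH s (q-1))) p q j) else cH s) \<and> cH s1 q = Some h \<and> cc s1 = q \<and> cu s1 = cu s \<and> \<not> chalt s1 \<and> a = AConfirm p q j \<and> ms = [])"
    then obtain p q j where "cH s1 = (if cH s q = None then (cH s)(q \<mapsto> Hash (the (cH s (q-1))) p q j) else cH s)"
      "cc s1 = q" "q = Suc (cc s)" by blast
    then show ?thesis by (auto simp: map_le_def dom_def)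
  qed auto
  then show ?thesis unfolding s_def .
qed

lemma step_inv:
  assumes S: "cstep F sg e s = (s1, a, ms)" and "a = AInv p"
  shows "\<exists>i. e = Invoke i p"
  using cstep_cases[OF S] assms(2) by auto

lemma step_commit:
  assumes G: "GInv E t st sg" and S: "cstep F sg e (st (ev_client e)) = (s1, a, ms)"
    and A: "a = ACommit p r l h z"
  shows "(ev_client e, SCommit p l h z) \<in> sg \<union> (\<lambda>m. (ev_client e, m)) ` set ms \<and> cH s1 l = Some h \<and> (\<exists>i \<omega>. e = Reply i \<omega>)"
proof -
  define s where "s = st (ev_client e)"
  have G1: "InvH sg (cH s)" and G2: "cH s (cc s) \<noteq> None"
    using G unfolding GInv_def s_def by simp_all
  from cstep_cases[OF S[folded s_def]] show ?thesis
  proof (elim disjE)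
    assume "\<not>chalt s \<and> (\<exists>i \<omega> H' \<gamma> \<mu> u r z. e = Reply i \<omega> \<and> rloop sg i (Suc (cc s)) (cH s) (cZ s) \<omega> = Some (H', \<gamma>, \<mu>) \<and> \<omega> \<noteq> [] \<and> cu s = Some u \<and> fst (last \<omega>) = u \<and> fst (snd (last \<omega>)) = i \<and> cH s1 = H' \<and> cc s1 = cc s \<and> cu s1 = None \<and> \<not> chalt s1 \<and> a = ACommit u r (cc s + length \<omega>) (the (H' (cc s + length \<omega>))) z \<and> ms = [SCommit u (cc s + length \<omega>) (the (H' (cc s + length \<omega>))) z])"
    then obtain i \<omega> H' \<gamma> \<mu> u r' z' where X: "e = Reply i \<omega> \<and> rloop sg i (Suc (cc s)) (cH s) (cZ s) \<omega> = Some (H', \<gamma>, \<mu>) \<and> \<omega> \<noteq> [] \<and> cu s = Some u \<and> fst (last \<omega>) = u \<and> fst (snd (last \<omega>)) = i \<and> cH s1 = H' \<and> cc s1 = cc s \<and> cu s1 = None \<and> \<not> chalt s1 \<and> a = ACommit u r' (cc s + length \<omega>) (the (H' (cc s + length \<omega>))) z' \<and> ms = [SCommit u (cc s + length \<omega>) (the (H' (cc s + length \<omega>))) z']"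
      by blast
    have R: "rloop sg i (Suc (cc s)) (cH s) (cZ s) \<omega> = Some (H', \<gamma>, \<mu>)" using X by simp
    have ne: "\<omega> \<noteq> []" using X by simp
    obtain x where Hx: "H' (Suc (cc s) + length \<omega> - 1) = Some x" using rloop_inv[OF R G1] G2 ne by auto
    have eqs: "p = u" "l = cc s + length \<omega>" "h = the (H' (cc s + length \<omega>))" "z = z'" using X A by simp_all
    have "H' l = Some h" using Hx eqs by simp
    then show ?thesis using X eqs by auto
  qed (use A in auto)
qed

lemma step_confirm:
  assumes S: "cstep F sg e s = (s1, a, ms)" and A: "a = AConfirm p q j"
  shows "\<exists>h z \<phi>. verify sg j \<phi> (SCommit p q h z) \<and> cH s1 q = Some h \<and> q = Suc (cc s) \<and> cc s1 = q"
  using cstep_cases[OF S] A by auto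

definition stepc :: "('s \<Rightarrow> 'op \<Rightarrow> 's \<times> 'r) \<Rightarrow> (nat \<Rightarrow> ('op, 's) cst) \<times> (nat \<times> 'op smsg) set \<Rightarrow> 'op ev \<Rightarrow> (nat \<Rightarrow> ('op, 's) cst) \<times> (nat \<times> 'op smsg) set" where
  "stepc F c e = ((fst c)(ev_client e := fst (cstep F (snd c) e (fst c (ev_client e)))),
     snd c \<union> (\<lambda>m. (ev_client e, m)) ` set (snd (snd (cstep F (snd c) e (fst c (ev_client e))))))"

lemma runs_len: "length (runs F st sg es) = length es"
  by (induction es arbitrary: st sg) (auto simp: Let_def split: prod.splits)

lemma runs_nth: "t < length es \<Longrightarrow> runs F st sg es ! t =
   (es ! t, fst (foldl (stepc F) (st, sg) (take t es)) (ev_client (es ! t)),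
    fst (snd (cstep F (snd (foldl (stepc F) (st, sg) (take t es))) (es ! t) (fst (foldl (stepc F) (st, sg) (take t es)) (ev_client (es ! t))))))"
proof (induction es arbitrary: st sg t)
  case Nil then show ?case by simp
next
  case (Cons e es)
  obtain s1 a ms where S: "cstep F sg e (st (ev_client e)) = (s1, a, ms)" by (cases "cstep F sg e (st (ev_client e))") auto
  have st: "stepc F (st, sg) e = (st(ev_client e := s1), sg \<union> (\<lambda>m. (ev_client e, m)) ` set ms)"
    unfolding stepc_def using S by simp
  have r: "runs F st sg (e # es) = (e, st (ev_client e), a) # runs F (st(ev_client e := s1)) (sg \<union> (\<lambda>m. (ev_client e, m)) ` set ms) es"
    using S by (simp add: Let_def)
  show ?case
  proof (cases t)
    case 0 then show ?thesis using r S by simp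
  next
    case (Suc t')
    then have "t' < length es" using Cons.prems by simp
    then have "runs F (st(ev_client e := s1)) (sg \<union> (\<lambda>m. (ev_client e, m)) ` set ms) es ! t' =
      (es ! t', fst (foldl (stepc F) (st(ev_client e := s1), sg \<union> (\<lambda>m. (ev_client e, m)) ` set ms) (take t' es)) (ev_client (es ! t')),
    fst (snd (cstep F (snd (foldl (stepc F) (st(ev_client e := s1), sg \<union> (\<lambda>m. (ev_client e, m)) ` set ms) (take t' es))) (es ! t') (fst (foldl (stepc F) (st(ev_client e := s1), sg \<union> (\<lambda>m. (ev_client e, m)) ` set ms) (take t' es)) (ev_client (es ! t'))))))"
      by (rule Cons.IH)
    then show ?thesis using r Suc st by simp
  qed
qed

definition cfg :: "('s \<Rightarrow> 'op \<Rightarrow> 's \<times> 'r) \<Rightarrow> 's \<Rightarrow> 'op ev list \<Rightarrow> nat \<Rightarrow> (nat \<Rightarrow> ('op, 's) cst) \<times> (nat \<times> 'op smsg) set" where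
  "cfg F s0 E t = foldl (stepc F) (\<lambda>_. init_cst s0, {}) (take t E)"

lemma map_filter_mem: "y \<in> set (List.map_filter f xs) \<longleftrightarrow> (\<exists>x\<in>set xs. f x = Some y)"
  by (induction xs) (auto split: option.splits)

lemma map_filter_append: "List.map_filter f (xs @ ys) = List.map_filter f xs @ List.map_filter f ys"
  by (induction xs) (auto split: option.splits)

lemma map_filter_map: "List.map_filter f (map g xs) = List.map_filter (f \<circ> g) xs"
  by (induction xs) (auto split: option.splits)

lemma dist_unique_gen:
  "distinct (List.map_filter f xs) \<Longrightarrow> a < length xs \<Longrightarrow> b < length xs \<Longrightarrow> f (xs ! a) = Some v \<Longrightarrow> f (xs ! b) = Some v \<Longrightarrow> a = b"
proof (induction xs arbitrary: a b)
  case Nil then show ?case by simp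
next
  case (Cons x xs)
  show ?case
  proof (cases a)
    case 0
    show ?thesis
    proof (cases b)
      case 0 then show ?thesis using \<open>a = 0\<close> by simp
    next
      case (Suc b')
      then have "v \<in> set (List.map_filter f xs)" using Cons.prems by (auto simp: map_filter_mem)
      moreover have "f x = Some v" using Cons.prems 0 by simp
      ultimately show ?thesis using Cons.prems(1) by simp
    qed
  next
    case (Suc a')
    show ?thesis
    proof (cases b)
      case 0
      then have "v \<in> set (List.map_filter f xs)" using Cons.prems Suc by (auto simp: map_filter_mem)
      moreover have "f x = Some v" using Cons.prems 0 by simp
      ultimately show ?thesis using Cons.prems(1) by simp
    next
      case (Suc b')
      have d: "distinct (List.map_filter f xs)" using Cons.prems(1) by (auto split: option.splits)
      show ?thesis using Cons.IH[OF d, of a' b'] Cons.prems \<open>a = Suc a'\<close> Suc by simp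
    qed
  qed
qed

lemma InvH_chain:
  assumes "InvH sg H" "H q = Some h" "q' \<le> q"
  shows "\<exists>h'. H q' = Some h' \<and> hops h' \<subseteq> hops h"
  using assms(2,3)
proof (induction q arbitrary: h)
  case 0 then show ?case by simp
next
  case (Suc q)
  show ?case
  proof (cases "q' = Suc q")
    case True then show ?thesis using Suc.prems by auto
  next
    case False
    then have le: "q' \<le> q" using Suc.prems by simp
    have "\<exists>x p j. h = Hash x p (Suc q) j \<and> H (Suc q - 1) = Some x"
      using assms(1) Suc.prems(1) unfolding InvH_def by blast
    then obtain x p j where hx: "h = Hash x p (Suc q) j" and Hq: "H q = Some x" by auto
    obtain h' where "H q' = Some h'" "hops h' \<subseteq> hops x" using Suc.IH[OF Hq le] by blast
    then show ?thesis using hx by auto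
  qed
qed

lemma tw_lemma: "x \<in> set xs \<Longrightarrow> length (takeWhile (\<lambda>y. y \<noteq> x) xs) < length xs \<and> xs ! length (takeWhile (\<lambda>y. y \<noteq> x) xs) = x
   \<and> takeWhile (\<lambda>y. y \<noteq> x) xs @ [x] = take (Suc (length (takeWhile (\<lambda>y. y \<noteq> x) xs))) xs"
  by (induction xs) auto

lemma sorted_before:
  assumes S: "sorted (map snd B)" and a: "(p, a) \<in> set B" and b: "(p', b) \<in> set B" and ab: "a < b"
  shows "\<exists>x y. x < y \<and> y < length B \<and> fst (B ! x) = p \<and> fst (B ! y) = p'"
proof -
  obtain x where x: "x < length B" "B ! x = (p, a)" using a by (auto simp: in_set_conv_nth)
  obtain y where y: "y < length B" "B ! y = (p', b)" using b by (auto simp: in_set_conv_nth)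
  have "x < y"
  proof (rule ccontr)
    assume "\<not> x < y"
    then have "map snd B ! y \<le> map snd B ! x" using sorted_nth_mono[OF S, of y x] x by simp
    then show False using x y ab by simp
  qed
  then show ?thesis using x y by (intro exI[of _ x] exI[of _ y]) auto
qed

context
  fixes F :: "'s \<Rightarrow> 'op \<Rightarrow> 's \<times> 'r" and s0 :: 's and E :: "'op ev list"
  assumes dist: "distinct (List.map_filter inv_op E)"
begin

abbreviation "ST t \<equiv> fst (cfg F s0 E t)"
abbreviation "SG t \<equiv> snd (cfg F s0 E t)"
abbreviation "CS t \<equiv> cstep F (SG t) (E ! t) (ST t (ev_client (E ! t)))"
abbreviation "act t \<equiv> fst (snd (CS t))"

lemma dist_unique: "a < length E \<Longrightarrow> b < length E \<Longrightarrow> inv_op (E ! a) = Some p \<Longrightarrow> inv_op (E ! b) = Some p \<Longrightarrow> a = b"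
  using dist_unique_gen[OF dist] by blast

lemma cfg_Suc: "t < length E \<Longrightarrow> cfg F s0 E (Suc t) = stepc F (cfg F s0 E t) (E ! t)"
  unfolding cfg_def by (simp add: take_Suc_conv_app_nth)

lemma ST_Suc: "t < length E \<Longrightarrow> ST (Suc t) = (ST t)(ev_client (E ! t) := fst (CS t))"
  using cfg_Suc unfolding stepc_def by simp

lemma SG_Suc: "t < length E \<Longrightarrow> SG (Suc t) = SG t \<union> (\<lambda>m. (ev_client (E ! t), m)) ` set (snd (snd (CS t)))"
  using cfg_Suc unfolding stepc_def by simp

lemma GInv_all: "t \<le> length E \<Longrightarrow> GInv E t (ST t) (SG t)"
proof (induction t)
  case 0
  have I: "InvH {} [0 \<mapsto> HNull]" unfolding InvH_def by auto
  show ?case using I unfolding GInv_def cfg_def init_cst_def by simp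
next
  case (Suc t)
  then have tl: "t < length E" by simp
  obtain s1 a ms where S: "CS t = (s1, a, ms)" by (cases "CS t") auto
  have uniq: "inv_op (E ! t0) \<noteq> Some p" if "t0 < t" "inv_op (E ! t) = Some p" for t0 p
  proof
    assume "inv_op (E ! t0) = Some p"
    then have "t0 = t" using dist_unique[of t0 t p] that tl by simp
    then show False using that by simp
  qed
  have "GInv E (Suc t) ((ST t)(ev_client (E ! t) := s1)) (SG t \<union> (\<lambda>m. (ev_client (E ! t), m)) ` set ms)"
    using GInv_step[OF Suc.IH[OF less_imp_le[OF tl]] tl refl uniq S] by blast
  moreover have e1: "ST (Suc t) = (ST t)(ev_client (E ! t) := s1)" using ST_Suc[OF tl] S by simp
  moreover have e2: "SG (Suc t) = SG t \<union> (\<lambda>m. (ev_client (E ! t), m)) ` set ms" using SG_Suc[OF tl] S by simp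
  ultimately show ?case by (simp only:)
qed

lemma persist_step: "t < length E \<Longrightarrow> cH (ST t c) q = Some h \<Longrightarrow> cH (ST (Suc t) c) q = Some h"
proof -
  assume tl: "t < length E" and h: "cH (ST t c) q = Some h"
  obtain s1 a ms where S: "CS t = (s1, a, ms)" by (cases "CS t") auto
  have "cH (ST t (ev_client (E ! t))) \<subseteq>\<^sub>m cH s1"
    using step_mono[OF GInv_all[OF less_imp_le[OF tl]] S] by blast
  then show ?thesis using ST_Suc[OF tl] S h by (auto simp: map_le_def dom_def)
qed

lemma persist: "t \<le> t' \<Longrightarrow> t' \<le> length E \<Longrightarrow> cH (ST t c) q = Some h \<Longrightarrow> cH (ST t' c) q = Some h"
proof (induction t')
  case 0 then show ?case by simp
next
  case (Suc t')
  show ?case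
  proof (cases "t = Suc t'")
    case True then show ?thesis using Suc.prems by simp
  next
    case False
    then have "cH (ST t' c) q = Some h" using Suc by simp
    then show ?thesis using persist_step Suc.prems by simp
  qed
qed

lemma SG_mono: "t \<le> t' \<Longrightarrow> t' \<le> length E \<Longrightarrow> SG t \<subseteq> SG t'"
proof (induction t')
  case 0 then show ?case by simp
next
  case (Suc t')
  show ?case
  proof (cases "t = Suc t'")
    case True then show ?thesis by simp
  next
    case False
    then have "SG t \<subseteq> SG t'" using Suc by simp
    then show ?thesis using SG_Suc Suc.prems by auto
  qed
qed

lemma cc_step: "t < length E \<Longrightarrow> cc (ST t c) \<le> cc (ST (Suc t) c)"
proof -
  assume tl: "t < length E"
  obtain s1 a ms where S: "CS t = (s1, a, ms)" by (cases "CS t") auto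
  have "cc (ST t (ev_client (E ! t))) \<le> cc s1"
    using step_mono[OF GInv_all[OF less_imp_le[OF tl]] S] by blast
  then show ?thesis using ST_Suc[OF tl] S by auto
qed

lemma A_inv: "t < length E \<Longrightarrow> act t = AInv p \<Longrightarrow> \<exists>i. E ! t = Invoke i p"
proof -
  assume A: "act t = AInv p"
  obtain s1 a ms where S: "CS t = (s1, a, ms)" by (cases "CS t") auto
  show ?thesis using step_inv[OF S] A S by simp
qed

lemma A_commit: "t < length E \<Longrightarrow> act t = ACommit p r l h z \<Longrightarrow>
   (ev_client (E ! t), SCommit p l h z) \<in> SG (Suc t) \<and> cH (ST (Suc t) (ev_client (E ! t))) l = Some h"
proof -
  assume tl: "t < length E" and A: "act t = ACommit p r l h z"
  obtain s1 a ms where S: "CS t = (s1, a, ms)" by (cases "CS t") auto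
  have "(ev_client (E ! t), SCommit p l h z) \<in> SG t \<union> (\<lambda>m. (ev_client (E ! t), m)) ` set ms \<and> cH s1 l = Some h"
    using step_commit[OF GInv_all[OF less_imp_le[OF tl]] S] A S by simp
  then show ?thesis using ST_Suc[OF tl] SG_Suc[OF tl] S by simp
qed

lemma A_conf: "t < length E \<Longrightarrow> act t = AConfirm p q j \<Longrightarrow>
   \<exists>h z. (j, SCommit p q h z) \<in> SG t \<and> cH (ST (Suc t) (ev_client (E ! t))) q = Some h
     \<and> q = Suc (cc (ST t (ev_client (E ! t)))) \<and> cc (ST (Suc t) (ev_client (E ! t))) = q"
proof -
  assume tl: "t < length E" and A: "act t = AConfirm p q j"
  obtain s1 a ms where S: "CS t = (s1, a, ms)" by (cases "CS t") auto
  obtain h z \<phi> where "verify (SG t) j \<phi> (SCommit p q h z) \<and> cH s1 q = Some h \<and> q = Suc (cc (ST t (ev_client (E ! t)))) \<and> cc s1 = q"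
    using step_confirm[OF S] A S by auto
  then show ?thesis using ST_Suc[OF tl] S unfolding verify_def by auto
qed


lemma GInv_TL: "n \<le> length E \<Longrightarrow> (j, SInvoke p j) \<in> SG n \<Longrightarrow> \<exists>t0 < n. E ! t0 = Invoke j p"
  using GInv_all[of n, unfolded GInv_def, THEN conjunct2, THEN conjunct2, THEN conjunct2, THEN conjunct2, THEN conjunct2, THEN conjunct2] by blast

lemma GInv_sig: "n \<le> length E \<Longrightarrow> (c, SCommit p l h z) \<in> SG n \<Longrightarrow> (\<exists>x. h = Hash x p l c) \<and> hops h \<subseteq> IS (SG n)"
  using GInv_all[of n, unfolded GInv_def, THEN conjunct2, THEN conjunct2, THEN conjunct1] by blast

lemma GInv_uniq: "n \<le> length E \<Longrightarrow> (c, SCommit p l h z) \<in> SG n \<Longrightarrow> (c, SCommit p l' h' z') \<in> SG n \<Longrightarrow> l = l' \<and> h = h'"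
  using GInv_all[of n, unfolded GInv_def, THEN conjunct2, THEN conjunct2, THEN conjunct2, THEN conjunct2, THEN conjunct2, THEN conjunct1] by blast

lemma GInv_H: "n \<le> length E \<Longrightarrow> InvH (SG n) (cH (ST n c))"
  using GInv_all[of n, unfolded GInv_def, THEN conjunct1] by blast

lemma sig_head: "n \<le> length E \<Longrightarrow> (c, SCommit p l h z) \<in> SG n \<Longrightarrow> (p, c) \<in> hops h \<and> hops h \<subseteq> IS (SG n)"
  using GInv_sig by fastforce

lemma KC: "t < t' \<Longrightarrow> t' < length E \<Longrightarrow> act t' = AInv p' \<Longrightarrow> (p', j) \<in> IS (SG (Suc t)) \<Longrightarrow> False"
proof -
  assume a: "t < t'" "t' < length E" "act t' = AInv p'" "(p', j) \<in> IS (SG (Suc t))"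
  obtain t0 where t0: "t0 < Suc t" "E ! t0 = Invoke j p'" using GInv_TL[of "Suc t" j p'] a unfolding IS_def by auto
  obtain i where "E ! t' = Invoke i p'" using A_inv a by blast
  then have "t0 = t'" using dist_unique[of t0 t' p'] t0 a by simp
  then show False using a t0 by simp
qed

lemma SU: "n \<le> length E \<Longrightarrow> (c1, SCommit p l1 h1 z1) \<in> SG n \<Longrightarrow> (c2, SCommit p l2 h2 z2) \<in> SG n \<Longrightarrow> c1 = c2 \<and> l1 = l2 \<and> h1 = h2"
proof -
  assume n: "n \<le> length E" and s1: "(c1, SCommit p l1 h1 z1) \<in> SG n" and s2: "(c2, SCommit p l2 h2 z2) \<in> SG n"
  have "(p, c1) \<in> IS (SG n)" "(p, c2) \<in> IS (SG n)" using sig_head[OF n s1] sig_head[OF n s2] by auto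
  then obtain t1 t2 where "t1 < n" "E ! t1 = Invoke c1 p" "t2 < n" "E ! t2 = Invoke c2 p"
    using GInv_TL[OF n] unfolding IS_def by blast
  moreover then have "t1 = t2" using dist_unique[of t1 t2 p] n by simp
  ultimately have "c1 = c2" by simp
  then show ?thesis using GInv_uniq[OF n s1] s2 by auto
qed

lemma trace_eq: "trace F s0 E = map (\<lambda>t. (E ! t, ST t (ev_client (E ! t)), act t)) [0..<length E]"
  by (rule nth_equalityI) (simp_all add: trace_def runs_len runs_nth cfg_def)

lemma commit_of_D: "commit_of a = Some (p, l) \<Longrightarrow> \<exists>r h z. a = ACommit p r l h z"
  by (cases a) auto

lemma conf_of_D: "conf_of a = Some y \<Longrightarrow> \<exists>p q j. a = AConfirm p q j \<and> y = (p, q, j)"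
  by (cases a) auto

lemma commits_eq: "commits (trace F s0 E) i = List.map_filter (\<lambda>t. if ev_client (E ! t) = i then commit_of (act t) else None) [0..<length E]"
  unfolding commits_def trace_eq map_filter_map by (simp add: comp_def)

lemma confs_eq: "confs (trace F s0 E) k = List.map_filter (\<lambda>t. if ev_client (E ! t) = k then conf_of (act t) else None) [0..<length E]"
  unfolding confs_def trace_eq map_filter_map by (simp add: comp_def)

lemma commits_mem: "(p, l) \<in> set (commits (trace F s0 E) i) \<Longrightarrow> \<exists>t < length E. ev_client (E ! t) = i \<and> (\<exists>r h z. act t = ACommit p r l h z)"
  unfolding commits_eq map_filter_mem by (auto split: if_splits dest: commit_of_D)

lemma confs_mem: "y \<in> set (confs (trace F s0 E) k) \<Longrightarrow> \<exists>t < length E. ev_client (E ! t) = k \<and> act t = AConfirm (fst y) (fst (snd y)) (snd (snd y))"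
  unfolding confs_eq map_filter_mem by (auto split: if_splits dest!: conf_of_D)

lemma resp_at_D: "resp_at (trace F s0 E) t p \<Longrightarrow> t < length E \<and> (\<exists>r l h z. act t = ACommit p r l h z)"
  unfolding resp_at_def trace_eq by auto

lemma inv_at_D: "inv_at (trace F s0 E) t p \<Longrightarrow> t < length E \<and> act t = AInv p"
  unfolding inv_at_def trace_eq by auto

lemma confs_sorted_aux:
  "m \<le> length E \<Longrightarrow> sorted_wrt (<) (map (fst \<circ> snd) (List.map_filter (\<lambda>t. if ev_client (E ! t) = k then conf_of (act t) else None) [0..<m]))
     \<and> (\<forall>x \<in> set (List.map_filter (\<lambda>t. if ev_client (E ! t) = k then conf_of (act t) else None) [0..<m]). fst (snd x) \<le> cc (ST m k))"
proof (induction m)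
  case 0 then show ?case by simp
next
  case (Suc m)
  then have ml: "m < length E" by simp
  define f where "f = (\<lambda>t. if ev_client (E ! t) = k then conf_of (act t) else None)"
  have IH: "sorted_wrt (<) (map (fst \<circ> snd) (List.map_filter f [0..<m])) \<and> (\<forall>x \<in> set (List.map_filter f [0..<m]). fst (snd x) \<le> cc (ST m k))"
    using Suc.IH[OF less_imp_le[OF ml]] unfolding f_def .
  have split: "List.map_filter f [0..<Suc m] = List.map_filter f [0..<m] @ List.map_filter f [m]"
    by (simp add: map_filter_append)
  have ccm: "cc (ST m k) \<le> cc (ST (Suc m) k)" using cc_step[OF ml] .
  have R: "sorted_wrt (<) (map (fst \<circ> snd) (List.map_filter f [0..<Suc m])) \<and> (\<forall>x \<in> set (List.map_filter f [0..<Suc m]). fst (snd x) \<le> cc (ST (Suc m) k))"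
  proof (cases "f m")
    case None
    then have "List.map_filter f [0..<Suc m] = List.map_filter f [0..<m]" using split by simp
    then show ?thesis using IH ccm by fastforce
  next
    case (Some y)
    then have ek: "ev_client (E ! m) = k" and cy: "conf_of (act m) = Some y" unfolding f_def by (auto split: if_splits)
    obtain p q j where A: "act m = AConfirm p q j" and y: "y = (p, q, j)" using conf_of_D[OF cy] by blast
    obtain h z where "q = Suc (cc (ST m k))" "cc (ST (Suc m) k) = q" using A_conf[OF ml A] ek by auto
    then have "List.map_filter f [0..<Suc m] = List.map_filter f [0..<m] @ [y]"
      and "fst (snd y) = Suc (cc (ST m k))" and "cc (ST (Suc m) k) = Suc (cc (ST m k))"
      using split Some y by auto
    then show ?thesis using IH by (auto simp: sorted_wrt_append)
  qed
  then show ?case unfolding f_def .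
qed

lemma confs_sorted: "sorted_wrt (<) (map (fst \<circ> snd) (confs (trace F s0 E) k))"
  using confs_sorted_aux[of "length E" k] unfolding confs_eq by simp

lemma chain_contra:
  assumes tt: "t < t'" "t' < length E" and inv: "act t' = AInv p'"
    and hc: "cH (ST (Suc t) c) L = Some hc" and LL: "L' \<le> L"
    and t2: "t2 \<le> length E" and h2: "cH (ST t2 c) L' = Some h2" and pj: "(p', j) \<in> hops h2"
  shows False
proof -
  have n1: "Suc t \<le> length E" using tt by simp
  have I: "InvH (SG (Suc t)) (cH (ST (Suc t) c))" using GInv_H[OF n1] .
  obtain g where g: "cH (ST (Suc t) c) L' = Some g" using InvH_chain[OF I hc LL] by blast
  have gI: "hops g \<subseteq> IS (SG (Suc t))" using I g unfolding InvH_def by blast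
  have "g = h2"
  proof (cases "Suc t \<le> t2")
    case True then show ?thesis using persist[OF True t2 g] h2 by simp
  next
    case False then show ?thesis using persist[OF _ n1 h2] g False by simp
  qed
  then show False using KC[OF tt inv] gI pj by blast
qed

lemma resp_commit:
  assumes t: "t < length E" and A: "act t = ACommit p r lc hc zc" and m: "(p, lp) \<in> set (commits (trace F s0 E) i)"
  shows "ev_client (E ! t) = i \<and> lc = lp"
proof -
  obtain t2 r2 h2 z2 where t2: "t2 < length E" "ev_client (E ! t2) = i" "act t2 = ACommit p r2 lp h2 z2"
    using commits_mem[OF m] by blast
  have s1: "(ev_client (E ! t), SCommit p lc hc zc) \<in> SG (length E)"
    using A_commit[OF t A] SG_mono[of "Suc t" "length E"] t by auto
  have s2: "(i, SCommit p lp h2 z2) \<in> SG (length E)"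
    using A_commit[OF t2(1) t2(3)] SG_mono[of "Suc t2" "length E"] t2 by auto
  show ?thesis using SU[OF le_refl s1 s2] by simp
qed

lemma conf_info:
  assumes a: "a < length (confs (trace F s0 E) k)"
  shows "\<exists>h j z. (j, SCommit (fst (confs (trace F s0 E) k ! a)) (fst (snd (confs (trace F s0 E) k ! a))) h z) \<in> SG (length E)
     \<and> cH (ST (length E) k) (fst (snd (confs (trace F s0 E) k ! a))) = Some h
     \<and> (fst (confs (trace F s0 E) k ! a), j) \<in> hops h"
proof -
  define y where "y = confs (trace F s0 E) k ! a"
  have "y \<in> set (confs (trace F s0 E) k)" using a unfolding y_def by simp
  then obtain t where t: "t < length E" "ev_client (E ! t) = k" "act t = AConfirm (fst y) (fst (snd y)) (snd (snd y))"
    using confs_mem by blast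
  obtain h z where hz: "(snd (snd y), SCommit (fst y) (fst (snd y)) h z) \<in> SG t" "cH (ST (Suc t) k) (fst (snd y)) = Some h"
    using A_conf[OF t(1) t(3)] t(2) by blast
  have sn: "(snd (snd y), SCommit (fst y) (fst (snd y)) h z) \<in> SG (length E)"
    using hz(1) SG_mono[of t "length E"] t by auto
  have hn: "cH (ST (length E) k) (fst (snd y)) = Some h"
    using persist[OF _ _ hz(2)] t by simp
  have "(fst y, snd (snd y)) \<in> hops h" using sig_head[OF le_refl sn] by simp
  then show ?thesis using sn hn unfolding y_def by blast
qed

lemma BB:
  assumes tt: "t < t'" "t' < length E" and A: "act t = ACommit p r lc hc zc" and inv: "act t' = AInv p'"
    and m1: "(p, lp) \<in> set (commits (trace F s0 E) i)" and m2: "(p', lp') \<in> set (commits (trace F s0 E) i)"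
  shows "lp < lp'"
proof (rule ccontr)
  assume "\<not> lp < lp'"
  then have le: "lp' \<le> lp" by simp
  have t: "t < length E" using tt by simp
  have rc: "ev_client (E ! t) = i \<and> lc = lp" using resp_commit[OF t A m1] .
  have hc: "cH (ST (Suc t) i) lp = Some hc" using A_commit[OF t A] rc by simp
  obtain t2 r2 h2 z2 where t2: "t2 < length E" "ev_client (E ! t2) = i" "act t2 = ACommit p' r2 lp' h2 z2"
    using commits_mem[OF m2] by blast
  have c2: "(i, SCommit p' lp' h2 z2) \<in> SG (Suc t2)" "cH (ST (Suc t2) i) lp' = Some h2"
    using A_commit[OF t2(1) t2(3)] t2(2) by auto
  have "(p', i) \<in> hops h2" using sig_head[OF _ c2(1)] t2 by simp
  then show False using chain_contra[OF tt inv hc le _ c2(2)] t2 by simp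
qed

lemma main_ctx:
  assumes PI: "pi_seq (trace F s0 E) i \<pi>"
  shows "\<forall>p \<in> set \<pi>. \<forall>p' \<in> set \<pi>. rt_before (trace F s0 E) p p' \<longrightarrow> appears_before \<pi> p p'"
proof (intro ballI impI)
  fix p p' assume pin: "p \<in> set \<pi>" and p'in: "p' \<in> set \<pi>" and rt: "rt_before (trace F s0 E) p p'"
  define T where "T = trace F s0 E"
  obtain t t' where tt: "t < t'" and resp: "resp_at T t p" and ia: "inv_at T t' p'"
    using rt unfolding rt_before_def T_def by blast
  have t': "t' < length E" and inv: "act t' = AInv p'" using inv_at_D[OF ia[unfolded T_def]] by auto
  have t: "t < length E" using tt t' by simp
  obtain r lc hc zc where A: "act t = ACommit p r lc hc zc" using resp_at_D[OF resp[unfolded T_def]] by blast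
  have sc: "(ev_client (E ! t), SCommit p lc hc zc) \<in> SG (Suc t)" and hcH: "cH (ST (Suc t) (ev_client (E ! t))) lc = Some hc"
    using A_commit[OF t A] by auto
  have hcI: "hops hc \<subseteq> IS (SG (Suc t))" using sig_head[OF _ sc] t by simp
  have notin: "\<And>j. (p', j) \<notin> hops hc" using KC[OF tt t' inv] hcI by blast
  have scn: "(ev_client (E ! t), SCommit p lc hc zc) \<in> SG (length E)"
    using sc SG_mono[of "Suc t" "length E"] t by auto
  from PI[unfolded pi_seq_def, folded T_def] show "appears_before \<pi> p p'"
  proof (elim disjE exE conjE)
    assume e: "conf_commits T i = {}" "\<pi> = map fst (sort_key snd (commits T i))"
    define B where "B = sort_key snd (commits T i)"
    obtain lp where m1: "(p, lp) \<in> set (commits T i)" using pin e unfolding B_def by auto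
    obtain lp' where m2: "(p', lp') \<in> set (commits T i)" using p'in e unfolding B_def by auto
    have "lp < lp'" using BB[OF tt t' A inv m1[unfolded T_def] m2[unfolded T_def]] .
    then obtain x y where "x < y" "y < length B" "fst (B ! x) = p" "fst (B ! y) = p'"
      using sorted_before[of B p lp p' lp'] m1 m2 unfolding B_def by auto
    then show ?thesis using e unfolding appears_before_def B_def by (intro exI[of _ x] exI[of _ y]) auto
  next
    fix pm l k
    assume cm: "(pm, l) \<in> conf_commits T i" and mx: "\<forall>(p', l') \<in> conf_commits T i. l' \<le> l"
      and cb: "confirmed_by T k pm"
      and pe: "\<pi> = (takeWhile (\<lambda>x. x \<noteq> pm) (map fst (confs T k)) @ [pm]) @ map fst (sort_key snd (filter (\<lambda>(p', l'). l < l') (commits T i)))"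
    define cs where "cs = confs T k"
    define am where "am = length (takeWhile (\<lambda>x. x \<noteq> pm) (map fst cs))"
    define B where "B = sort_key snd (filter (\<lambda>(p', l'). l < l') (commits T i))"
    have pmin: "pm \<in> set (map fst cs)" using cb unfolding confirmed_by_def cs_def .
    have tw: "am < length cs" "fst (cs ! am) = pm" "takeWhile (\<lambda>x. x \<noteq> pm) (map fst cs) @ [pm] = take (Suc am) (map fst cs)"
      using tw_lemma[OF pmin] unfolding am_def by auto
    have pe': "\<pi> = take (Suc am) (map fst cs) @ map fst B" using pe tw(3) unfolding cs_def B_def by simp
    have lenpi: "length \<pi> = Suc am + length B" using pe' tw(1) by simp
    have piA: "\<And>a. a \<le> am \<Longrightarrow> \<pi> ! a = fst (cs ! a)" using pe' tw(1) by (auto simp: nth_append)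
    have piB: "\<And>b. b < length B \<Longrightarrow> \<pi> ! (Suc am + b) = fst (B ! b)" using pe' tw(1) by (auto simp: nth_append)
    have memA: "\<exists>a \<le> am. fst (cs ! a) = x" if xin: "x \<in> set (take (Suc am) (map fst cs))" for x
    proof -
      obtain j where j: "j < length (take (Suc am) (map fst cs))" "take (Suc am) (map fst cs) ! j = x"
        using xin by (auto simp: in_set_conv_nth)
      then have "j \<le> am" "fst (cs ! j) = x" using tw(1) by auto
      then show ?thesis by blast
    qed
    have memB: "\<exists>b < length B. fst (B ! b) = x" if xin: "x \<in> set (map fst B)" for x
    proof -
      obtain j where j: "j < length (map fst B)" "map fst B ! j = x"
        using xin by (auto simp: in_set_conv_nth)
      then show ?thesis by auto
    qed
    have Bsorted: "sorted (map snd B)" unfolding B_def by simp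
    have Bcomm: "\<And>x. x \<in> set B \<Longrightarrow> x \<in> set (commits T i) \<and> l < snd x" unfolding B_def by auto
    have qsorted: "sorted_wrt (<) (map (fst \<circ> snd) cs)" unfolding cs_def T_def using confs_sorted .
    have qle: "\<And>a b. a \<le> b \<Longrightarrow> b < length cs \<Longrightarrow> fst (snd (cs ! a)) \<le> fst (snd (cs ! b))"
    proof -
      fix a b assume "a \<le> b" "b < length cs"
      then show "fst (snd (cs ! a)) \<le> fst (snd (cs ! b))"
        using sorted_wrt_nth_less[OF qsorted, of a b] by (cases "a = b") auto
    qed
    have pmc: "(pm, l) \<in> set (commits T i)" using cm unfolding conf_commits_def by auto
    obtain tm rm hm zm where tm: "tm < length E" "ev_client (E ! tm) = i" "act tm = ACommit pm rm l hm zm"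
      using commits_mem[OF pmc[unfolded T_def]] by blast
    have cmH: "(i, SCommit pm l hm zm) \<in> SG (Suc tm)" "cH (ST (Suc tm) i) l = Some hm"
      using A_commit[OF tm(1) tm(3)] tm(2) by auto
    have cmHn: "(i, SCommit pm l hm zm) \<in> SG (length E)"
      using cmH(1) SG_mono[of "Suc tm" "length E"] tm by auto
    obtain hq jq zq where cq: "(jq, SCommit pm (fst (snd (cs ! am))) hq zq) \<in> SG (length E)"
      "cH (ST (length E) k) (fst (snd (cs ! am))) = Some hq"
      using conf_info[OF tw(1)[unfolded cs_def T_def]] tw(2) unfolding cs_def T_def by auto
    have qm: "fst (snd (cs ! am)) = l" and hqm: "hq = hm" using SU[OF le_refl cq(1) cmHn] by auto
    have HnK: "InvH (SG (length E)) (cH (ST (length E) k))" using GInv_H[OF le_refl] .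
    show "appears_before \<pi> p p'"
    proof (cases "p \<in> set (take (Suc am) (map fst cs))")
      case pA: True
      then obtain a where a: "a \<le> am" "fst (cs ! a) = p" using memA by blast
      show ?thesis
      proof (cases "p' \<in> set (take (Suc am) (map fst cs))")
        case True
        then obtain b where b: "b \<le> am" "fst (cs ! b) = p'" using memA by blast
        show ?thesis
        proof (cases "a < b")
          case True
          then show ?thesis using a b piA lenpi unfolding appears_before_def
            by (intro exI[of _ a] exI[of _ b]) auto
        next
          case False
          then have ba: "b \<le> a" by simp
          have al: "a < length cs" using a tw(1) by simp
          have bl: "b < length cs" using b tw(1) by simp
          obtain ha ja za where ia: "(ja, SCommit p (fst (snd (cs ! a))) ha za) \<in> SG (length E)"
            "cH (ST (length E) k) (fst (snd (cs ! a))) = Some ha"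
            using conf_info[OF al[unfolded cs_def T_def]] a unfolding cs_def T_def by auto
          obtain hb jb zb where ib: "cH (ST (length E) k) (fst (snd (cs ! b))) = Some hb" "(p', jb) \<in> hops hb"
            using conf_info[OF bl[unfolded cs_def T_def]] b unfolding cs_def T_def by auto
          have "ha = hc" using SU[OF le_refl ia(1) scn] by simp
          moreover obtain h' where "cH (ST (length E) k) (fst (snd (cs ! b))) = Some h'" "hops h' \<subseteq> hops ha"
            using InvH_chain[OF HnK ia(2) qle[OF ba al]] by blast
          ultimately have "(p', jb) \<in> hops hc" using ib by auto
          then show ?thesis using notin by blast
        qed
      next
        case False
        then have "p' \<in> set (map fst B)" using p'in pe' by auto
        then obtain b where b: "b < length B" "fst (B ! b) = p'" using memB by blast
        show ?thesis using a b piA piB lenpi unfolding appears_before_def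
          by (intro exI[of _ a] exI[of _ "Suc am + b"]) auto
      qed
    next
      case False
      then have "p \<in> set (map fst B)" using pin pe' by auto
      then obtain a where a: "a < length B" "fst (B ! a) = p" using memB by blast
      have Ba: "B ! a \<in> set B" using a by simp
      have m1: "(p, snd (B ! a)) \<in> set (commits T i)" and la: "l < snd (B ! a)"
        using Bcomm[OF Ba] a by (metis prod.collapse)+
      have rc: "ev_client (E ! t) = i \<and> lc = snd (B ! a)" using resp_commit[OF t A m1[unfolded T_def]] .
      have hci: "cH (ST (Suc t) i) (snd (B ! a)) = Some hc" using hcH rc by simp
      show ?thesis
      proof (cases "p' \<in> set (take (Suc am) (map fst cs))")
        case True
        then obtain b where b: "b \<le> am" "fst (cs ! b) = p'" using memA by blast
        have bl: "b < length cs" using b tw(1) by simp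
        obtain hb jb zb where ib: "cH (ST (length E) k) (fst (snd (cs ! b))) = Some hb" "(p', jb) \<in> hops hb"
          using conf_info[OF bl[unfolded cs_def T_def]] b unfolding cs_def T_def by auto
        obtain h' where "cH (ST (length E) k) (fst (snd (cs ! b))) = Some h'" "hops h' \<subseteq> hops hq"
          using InvH_chain[OF HnK cq(2) qle[OF b(1) tw(1)]] by blast
        then have "(p', jb) \<in> hops hm" using ib hqm by auto
        then have False using chain_contra[OF tt t' inv hci _ _ cmH(2)] la tm(1) by simp
        then show ?thesis ..
      next
        case False
        then have "p' \<in> set (map fst B)" using p'in pe' by auto
        then obtain b where b: "b < length B" "fst (B ! b) = p'" using memB by blast
        have Bb: "B ! b \<in> set B" using b by simp
        have m2: "(p', snd (B ! b)) \<in> set (commits T i)"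
          using Bcomm[OF Bb] b by (metis prod.collapse)
        have lt: "snd (B ! a) < snd (B ! b)" using BB[OF tt t' A inv m1[unfolded T_def] m2[unfolded T_def]] .
        obtain x y where xy: "x < y" "y < length B" "fst (B ! x) = p" "fst (B ! y) = p'"
          using sorted_before[OF Bsorted _ _ lt, of p p'] Ba Bb a b by (metis prod.collapse)
        show ?thesis using xy piB lenpi unfolding appears_before_def
          by (intro exI[of _ "Suc am + x"] exI[of _ "Suc am + y"]) auto
      qed
    qed
  qed
qed

end

theorem lemma5:
  fixes F :: "'s \<Rightarrow> 'op \<Rightarrow> 's \<times> 'r" and s0 :: 's and n :: nat
    and E :: "'op ev list" and i :: nat and \<pi> :: "'op list"
  assumes "well_formed n E (trace F s0 E)"
    and "i \<in> {1..n}"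
    and "pi_seq (trace F s0 E) i \<pi>"
  shows "\<forall>p \<in> set \<pi>. \<forall>p' \<in> set \<pi>. rt_before (trace F s0 E) p p' \<longrightarrow> appears_before \<pi> p p'"
proof -
  have dist: "distinct (List.map_filter inv_op E)" using assms(1) unfolding well_formed_def by blast
  show ?thesis using main_ctx[OF dist assms(3)] .
qed

end
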